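(* For every integer $n\ge 1$, the strong product $P_3\boxtimes R_n$ is $1$-perfectly orientable.
   Context: All graphs are finite and simple. An orientation of a graph $G$ is $1$-perfect if the out-neighborhood of every vertex induces a clique in $G$; $G$ is $1$-perfectly orientable if it admits a $1$-perfect orientation. The strong product $G\boxtimes H$ has vertex set $V(G)\times V(H)$, with distinct $(u,v),(u',v')$ adjacent iff $u'\in N_G[u]$ and $v'\in N_H[v]$ (closed neighborhoods). $P_3$ is the path on $3$ vertices. For an integer $n\ge 0$, the raft $R_n$ is the graph with vertex set $X\cup Y$, where $X=\{x_0,\dots,x_n\}$ and $Y=\{y_0,\dots,y_n\}$ are disjoint cliques, and, for $0\le i,j\le n$, $x_i$ is adjacent to $y_j$ iff $i+j\ge n+1$ (no other edges). *)

theory Defs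
  imports Main
begin

text \<open>A finite simple graph is represented by a finite vertex set V together with a
symmetric irreflexive adjacency relation E (only its restriction to V matters).\<close>

definition simple_graph :: "'a set \<Rightarrow> ('a \<Rightarrow> 'a \<Rightarrow> bool) \<Rightarrow> bool" where
  "simple_graph V E \<longleftrightarrow> finite V \<and> (\<forall>u v. E u v \<longrightarrow> E v u) \<and> (\<forall>u. \<not> E u u)"

definition orientation :: "'a set \<Rightarrow> ('a \<Rightarrow> 'a \<Rightarrow> bool) \<Rightarrow> ('a \<Rightarrow> 'a \<Rightarrow> bool) \<Rightarrow> bool" where
  "orientation V E D \<longleftrightarrow>
     (\<forall>u v. D u v \<longrightarrow> u \<in> V \<and> v \<in> V \<and> E u v) \<and>
     (\<forall>u\<in>V. \<forall>v\<in>V. E u v \<longrightarrow> (D u v \<or> D v u) \<and> \<not> (D u v \<and> D v u))"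

definition is_clique :: "'a set \<Rightarrow> ('a \<Rightarrow> 'a \<Rightarrow> bool) \<Rightarrow> 'a set \<Rightarrow> bool" where
  "is_clique V E C \<longleftrightarrow> C \<subseteq> V \<and> (\<forall>x\<in>C. \<forall>y\<in>C. x \<noteq> y \<longrightarrow> E x y)"

definition out_nbhd :: "('a \<Rightarrow> 'a \<Rightarrow> bool) \<Rightarrow> 'a \<Rightarrow> 'a set" where
  "out_nbhd D v = {w. D v w}"

definition one_perfect_orientation ::
  "'a set \<Rightarrow> ('a \<Rightarrow> 'a \<Rightarrow> bool) \<Rightarrow> ('a \<Rightarrow> 'a \<Rightarrow> bool) \<Rightarrow> bool" where
  "one_perfect_orientation V E D \<longleftrightarrow>
     orientation V E D \<and> (\<forall>v\<in>V. is_clique V E (out_nbhd D v))"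

definition one_perfectly_orientable :: "'a set \<Rightarrow> ('a \<Rightarrow> 'a \<Rightarrow> bool) \<Rightarrow> bool" where
  "one_perfectly_orientable V E \<longleftrightarrow> (\<exists>D. one_perfect_orientation V E D)"

definition strong_product_verts :: "'a set \<Rightarrow> 'b set \<Rightarrow> ('a \<times> 'b) set" where
  "strong_product_verts V1 V2 = V1 \<times> V2"

definition strong_product_adj ::
  "('a \<Rightarrow> 'a \<Rightarrow> bool) \<Rightarrow> ('b \<Rightarrow> 'b \<Rightarrow> bool) \<Rightarrow> ('a \<times> 'b) \<Rightarrow> ('a \<times> 'b) \<Rightarrow> bool" where
  "strong_product_adj E1 E2 p q \<longleftrightarrow>
     p \<noteq> q \<and> (fst q = fst p \<or> E1 (fst p) (fst q)) \<and> (snd q = snd p \<or> E2 (snd p) (snd q))"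

definition P3_verts :: "nat set" where
  "P3_verts = {0, 1, 2}"

definition P3_adj :: "nat \<Rightarrow> nat \<Rightarrow> bool" where
  "P3_adj i j \<longleftrightarrow> i + 1 = j \<or> j + 1 = i"

text \<open>The raft R_n: x_i is Inl i, y_j is Inr j, for 0 \<le> i,j \<le> n.\<close>
definition raft_verts :: "nat \<Rightarrow> (nat + nat) set" where
  "raft_verts n = Inl ` {0..n} \<union> Inr ` {0..n}"

fun raft_adj :: "nat \<Rightarrow> (nat + nat) \<Rightarrow> (nat + nat) \<Rightarrow> bool" where
  "raft_adj n (Inl i) (Inl j) = (i \<noteq> j)"
| "raft_adj n (Inr i) (Inr j) = (i \<noteq> j)"
| "raft_adj n (Inl i) (Inr j) = (i + j \<ge> n + 1)"
| "raft_adj n (Inr j) (Inl i) = (i + j \<ge> n + 1)"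

end

theory Submission
  imports Defs
begin

definition inK :: "nat \<Rightarrow> nat \<Rightarrow> (nat + nat) \<Rightarrow> bool" where
  "inK n k v = (case v of Inl i \<Rightarrow> k \<le> i | Inr j \<Rightarrow> n + 1 \<le> j + k)"

definition MM :: "nat \<Rightarrow> nat \<times> (nat + nat) \<Rightarrow> nat \<times> (nat + nat) \<Rightarrow> bool" where
  "MM n p q = (case p of
      (a, Inl i) \<Rightarrow> (if a = 0 then fst q \<le> 1 \<and> inK n 0 (snd q)
                    else 1 \<le> fst q \<and> fst q \<le> 2 \<and> inK n i (snd q))
    | (a, Inr j) \<Rightarrow> (if a = 2 then 1 \<le> fst q \<and> fst q \<le> 2 \<and> inK n (n+1) (snd q)
                    else fst q \<le> 1 \<and> inK n (n+1-j) (snd q)))"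

fun gk :: "nat + nat \<Rightarrow> nat" where
  "gk (Inl i) = 2 * i" | "gk (Inr j) = 2 * j + 1"

definition key :: "nat \<times> (nat + nat) \<Rightarrow> nat" where
  "key p = fst p + 3 * gk (snd p)"

lemma key_inj: "fst p \<le> 2 \<Longrightarrow> fst q \<le> 2 \<Longrightarrow> key p = key q \<Longrightarrow> p = q"
  apply (cases p; cases q)
  subgoal for a v b w
    by (cases v; cases w) (auto simp: key_def; presburger)+
  done

lemma V_iff: "(a, v) \<in> strong_product_verts P3_verts (raft_verts n) \<longleftrightarrow>
   a \<le> 2 \<and> (\<exists>i. i \<le> n \<and> (v = Inl i \<or> v = Inr i))"
  by (auto simp: strong_product_verts_def P3_verts_def raft_verts_def)

lemma E_sym: "strong_product_adj P3_adj (raft_adj n) p q \<Longrightarrow> strong_product_adj P3_adj (raft_adj n) q p"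
  unfolding strong_product_adj_def P3_adj_def
  by (cases "snd p"; cases "snd q") auto

lemma V_elim: assumes "(a, v) \<in> strong_product_verts P3_verts (raft_verts n)"
  obtains i where "a \<le> 2" "i \<le> n" "v = Inl i \<or> v = Inr i"
  using assms unfolding V_iff by blast

lemma cover:
  assumes "a \<le> 2" "b \<le> 2" "i \<le> n" "j \<le> n" "v = Inl i \<or> v = Inr i" "w = Inl j \<or> w = Inr j"
    "strong_product_adj P3_adj (raft_adj n) (a,v) (b,w)"
  shows "MM n (a,v) (b,w) \<or> MM n (b,w) (a,v)"
  using assms
  by (auto simp: MM_def inK_def strong_product_adj_def P3_adj_def)

lemma clique:
  assumes "a \<le> 2" "b \<le> 2" "i \<le> n" "j \<le> n" "v = Inl i \<or> v = Inr i" "w = Inl j \<or> w = Inr j"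
    "c \<le> 2" "MM n (c,u) (a,v)" "MM n (c,u) (b,w)" "(a,v) \<noteq> (b,w)"
  shows "strong_product_adj P3_adj (raft_adj n) (a,v) (b,w)"
  using assms
  by (cases u) (auto simp: MM_def inK_def strong_product_adj_def P3_adj_def split: if_splits)


theorem proposition19:
  fixes n :: nat
  assumes "n \<ge> 1"
  shows "one_perfectly_orientable
           (strong_product_verts P3_verts (raft_verts n))
           (strong_product_adj P3_adj (raft_adj n))"
proof -
  let ?V = "strong_product_verts P3_verts (raft_verts n)"
  let ?E = "strong_product_adj P3_adj (raft_adj n)"
  define D where "D p q = (p \<in> ?V \<and> q \<in> ?V \<and> ?E p q \<and> MM n p q \<and> (MM n q p \<longrightarrow> key p < key q))" for p q
  have cov: "MM n p q \<or> MM n q p" if h: "p \<in> ?V" "q \<in> ?V" "?E p q" for p q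
  proof -
    obtain a v b w where pq: "p = (a,v)" "q = (b,w)" by (cases p; cases q)
    obtain i j where "a \<le> 2" "b \<le> 2" "i \<le> n" "j \<le> n" "v = Inl i \<or> v = Inr i" "w = Inl j \<or> w = Inr j"
      using h(1,2) unfolding pq by (elim V_elim) blast
    then show ?thesis using cover h pq by blast
  qed
  have kne: "key p \<noteq> key q" if "p \<in> ?V" "q \<in> ?V" "?E p q" for p q
  proof
    assume k: "key p = key q"
    have "fst p \<le> 2" using that(1) by (cases p) (auto elim: V_elim)
    moreover have "fst q \<le> 2" using that(2) by (cases q) (auto elim: V_elim)
    ultimately have "p = q" using key_inj k by blast
    then show False using that(3) by (simp add: strong_product_adj_def)
  qed
  have orient: "orientation ?V ?E D"
    unfolding orientation_def
  proof (rule conjI)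
    show "\<forall>u v. D u v \<longrightarrow> u \<in> ?V \<and> v \<in> ?V \<and> ?E u v" by (simp add: D_def)
  next
    show "\<forall>u\<in>?V. \<forall>v\<in>?V. ?E u v \<longrightarrow> (D u v \<or> D v u) \<and> \<not> (D u v \<and> D v u)"
    proof (intro ballI impI)
      fix u v assume uv: "u \<in> ?V" "v \<in> ?V" "?E u v"
      have sym: "?E v u" using uv(3) by (rule E_sym)
      have "key u < key v \<or> key v < key u" using kne[OF uv] by linarith
      then have "D u v \<or> D v u" using cov[OF uv] uv sym unfolding D_def by blast
      moreover have "\<not> (D u v \<and> D v u)" unfolding D_def by linarith
      ultimately show "(D u v \<or> D v u) \<and> \<not> (D u v \<and> D v u)" by blast
    qed
  qed
  have cl: "is_clique ?V ?E (out_nbhd D v)" if hv: "v \<in> ?V" for v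
    unfolding is_clique_def out_nbhd_def
  proof (intro conjI ballI impI)
    show "{w. D v w} \<subseteq> ?V" by (auto simp: D_def)
  next
    fix x y assume x: "x \<in> {w. D v w}" and y: "y \<in> {w. D v w}" and xy: "x \<noteq> y"
    show "?E x y"
    proof -
      obtain a u b w c t where pq: "x = (a,u)" "y = (b,w)" "v = (c,t)" by (cases x; cases y; cases v)
      have xV: "x \<in> ?V" and yV: "y \<in> ?V" and m1: "MM n v x" and m2: "MM n v y"
        using x y by (auto simp: D_def)
      obtain i j where "a \<le> 2" "b \<le> 2" "i \<le> n" "j \<le> n" "u = Inl i \<or> u = Inr i" "w = Inl j \<or> w = Inr j"
        using xV yV unfolding pq by (elim V_elim) blast
      moreover have "c \<le> 2" using hv unfolding pq by (elim V_elim)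
      ultimately show ?thesis using clique[of a b i n j u w c t] m1 m2 xy pq by blast
    qed
  qed
  show ?thesis unfolding one_perfectly_orientable_def one_perfect_orientation_def
    using orient cl by blast
qed

end
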